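(* Let $\mathcal{C}$ be the smallest set of functions of finite arity on $[0,1]$ such that: (i) $\mathcal{C}$ contains all projections $p^n_i(x_0,\dots,x_{n-1})=x_i$; (ii) if $g\in\mathcal{C}$ is $n$-ary and $q\in\mathbb{Q}\cap[0,1]$, then $\mathbf{x}\mapsto\chi_q(g(\mathbf{x}))$ belongs to $\mathcal{C}$; (iii) if $g_1,g_2\in\mathcal{C}$ are $n$-ary and $q\in\mathbb{Q}\cap[0,1]$, then $\mathbf{x}\mapsto\mathsf{Med}_q(g_1(\mathbf{x}),g_2(\mathbf{x}))$ belongs to $\mathcal{C}$; (iv) if $I$ is a nonempty set with $|I|\le\mathfrak{c}$ and $g_i\in\mathcal{C}$, $i\in I$, are $n$-ary, then the pointwise supremum $\bigvee_{i\in I}g_i$ and the pointwise infimum $\bigwedge_{i\in I}g_i$ belong to $\mathcal{C}$. Then $\mathcal{C}=\mathsf{Agg}$; that is, $\mathsf{Agg}$ is generated by the countable set consisting of the infinitary operations $\bigvee$ and $\bigwedge$, the functions $\chi_q$ and the medians $\mathsf{Med}_q$, $q\in\mathbb{Q}\cap[0,1]$.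
   Context: An $n$-ary aggregation function on $[0,1]$ is a function $f\colon[0,1]^n\to[0,1]$ nondecreasing in each coordinate with $f(0,\dots,0)=0$ and $f(1,\dots,1)=1$; $\mathsf{Agg}$ is the set of all aggregation functions of all finite arities $n\in\mathbb{N}$ (unary ones not restricted to the identity). For $a\in[0,1]$, $\chi_a(x)=1$ if $x\ge a$ and $x\neq0$, and $\chi_a(x)=0$ otherwise. $\mathsf{Med}_b(x,y)$ is the median of $x,y,b$. $\mathfrak{c}=2^{\aleph_0}$. *)

theory Defs
  imports Complex_Main
begin

definition cube :: "nat \<Rightarrow> real list set" where
  "cube n = {xs. length xs = n \<and> set xs \<subseteq> {0..1}}"

definition chi :: "real \<Rightarrow> real \<Rightarrow> real" where
  "chi a x = (if x \<ge> a \<and> x \<noteq> 0 then 1 else 0)"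

definition Med :: "real \<Rightarrow> real \<Rightarrow> real \<Rightarrow> real" where
  "Med b x y = max (min x y) (min (max x y) b)"

text \<open>Convention: an n-ary function on [0,1] is represented by a function on real lists
  that vanishes outside cube n (so that extensional equality on [0,1]^n is HOL equality).\<close>
definition Agg :: "(nat \<times> (real list \<Rightarrow> real)) set" where
  "Agg = {(n, f). (\<forall>xs. xs \<notin> cube n \<longrightarrow> f xs = 0)
      \<and> (\<forall>xs\<in>cube n. f xs \<in> {0..1})
      \<and> (\<forall>xs\<in>cube n. \<forall>ys\<in>cube n. (\<forall>i<n. xs ! i \<le> ys ! i) \<longrightarrow> f xs \<le> f ys)
      \<and> f (replicate n 0) = 0 \<and> f (replicate n 1) = 1}"

text \<open>Index sets of cardinality at most continuum are represented as nonempty sets of reals.\<close>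
inductive_set Cgen :: "(nat \<times> (real list \<Rightarrow> real)) set" where
  proj: "i < n \<Longrightarrow> (n, \<lambda>xs. if xs \<in> cube n then xs ! i else 0) \<in> Cgen"
| chi: "(n, g) \<in> Cgen \<Longrightarrow> q \<in> \<rat> \<Longrightarrow> 0 \<le> q \<Longrightarrow> q \<le> 1
        \<Longrightarrow> (n, \<lambda>xs. chi q (g xs)) \<in> Cgen"
| med: "(n, g1) \<in> Cgen \<Longrightarrow> (n, g2) \<in> Cgen \<Longrightarrow> q \<in> \<rat> \<Longrightarrow> 0 \<le> q \<Longrightarrow> q \<le> 1
        \<Longrightarrow> (n, \<lambda>xs. Med q (g1 xs) (g2 xs)) \<in> Cgen"
| sup: "(I :: real set) \<noteq> {} \<Longrightarrow> (\<forall>i\<in>I. (n, g i) \<in> Cgen)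
        \<Longrightarrow> (n, \<lambda>xs. SUP i\<in>I. g i xs) \<in> Cgen"
| inf: "(I :: real set) \<noteq> {} \<Longrightarrow> (\<forall>i\<in>I. (n, g i) \<in> Cgen)
        \<Longrightarrow> (n, \<lambda>xs. INF i\<in>I. g i xs) \<in> Cgen"

end

theory Submission
  imports Defs
begin


lemma chi_01: "chi q x \<in> {0,1}" by (simp add: chi_def)
lemma chi_mono: "x \<le> y \<Longrightarrow> 0 \<le> x \<Longrightarrow> chi q x \<le> chi q y"
  by (auto simp: chi_def)

lemma Med_mono: "x \<le> x' \<Longrightarrow> y \<le> y' \<Longrightarrow> Med q x y \<le> Med q x' y'"
  by (auto simp: Med_def max_def min_def)

lemma Med_range: "0 \<le> x \<Longrightarrow> x \<le> 1 \<Longrightarrow> 0 \<le> y \<Longrightarrow> y \<le> 1 \<Longrightarrow> 0 \<le> q \<Longrightarrow> q \<le> 1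
   \<Longrightarrow> 0 \<le> Med q x y \<and> Med q x y \<le> 1"
  by (auto simp: Med_def max_def min_def)

lemma cube_nth: "xs \<in> cube n \<Longrightarrow> i < n \<Longrightarrow> 0 \<le> xs ! i \<and> xs ! i \<le> 1"
  unfolding cube_def using nth_mem by fastforce

lemma Cgen_Agg: "(n, f) \<in> Cgen \<Longrightarrow> (n, f) \<in> Agg"
proof (induction rule: Cgen.induct)
  case (proj i n)
  have "\<And>xs. set xs \<subseteq> {0..1} \<Longrightarrow> i < length xs \<Longrightarrow> 0 \<le> xs ! i \<and> xs ! i \<le> 1"
    using nth_mem by fastforce
  then show ?case using proj unfolding Agg_def by (auto simp: cube_def)
next
  case (chi n g q)
  from chi.IH have A: "\<forall>xs. xs \<notin> cube n \<longrightarrow> g xs = 0" "\<forall>xs\<in>cube n. g xs \<in> {0..1}"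
    "\<forall>xs\<in>cube n. \<forall>ys\<in>cube n. (\<forall>i<n. xs ! i \<le> ys ! i) \<longrightarrow> g xs \<le> g ys"
    "g (replicate n 0) = 0" "g (replicate n 1) = 1" unfolding Agg_def by auto
  show ?case unfolding Agg_def
  proof (intro CollectI case_prodI conjI ballI allI impI)
    fix xs ys assume xs: "xs \<in> cube n" and ys: "ys \<in> cube n" and le: "\<forall>i<n. xs ! i \<le> ys ! i"
    show "chi q (g xs) \<le> chi q (g ys)"
      apply (rule chi_mono) using A xs ys le by auto
  qed (use A chi.hyps in \<open>auto simp: chi_def\<close>)
next
  case (med n g1 g2 q)
  from med.IH have A: "\<forall>xs. xs \<notin> cube n \<longrightarrow> g1 xs = 0" "\<forall>xs\<in>cube n. g1 xs \<in> {0..1}"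
    "\<forall>xs\<in>cube n. \<forall>ys\<in>cube n. (\<forall>i<n. xs ! i \<le> ys ! i) \<longrightarrow> g1 xs \<le> g1 ys"
    "g1 (replicate n 0) = 0" "g1 (replicate n 1) = 1"
    "\<forall>xs. xs \<notin> cube n \<longrightarrow> g2 xs = 0" "\<forall>xs\<in>cube n. g2 xs \<in> {0..1}"
    "\<forall>xs\<in>cube n. \<forall>ys\<in>cube n. (\<forall>i<n. xs ! i \<le> ys ! i) \<longrightarrow> g2 xs \<le> g2 ys"
    "g2 (replicate n 0) = 0" "g2 (replicate n 1) = 1" unfolding Agg_def by auto
  show ?case unfolding Agg_def
  proof (intro CollectI case_prodI conjI ballI allI impI)
    fix xs ys assume xs: "xs \<in> cube n" and ys: "ys \<in> cube n" and le: "\<forall>i<n. xs ! i \<le> ys ! i"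
    show "Med q (g1 xs) (g2 xs) \<le> Med q (g1 ys) (g2 ys)"
      apply (rule Med_mono) using A xs ys le by auto
  next
    fix xs assume xs: "xs \<in> cube n"
    show "Med q (g1 xs) (g2 xs) \<in> {0..1}" using Med_range[of "g1 xs" "g2 xs" q] A xs med.hyps by auto
  qed (use A med.hyps in \<open>auto simp: Med_def\<close>)
next
  case (sup I n g)
  have b: "\<And>xs. bdd_above ((\<lambda>i. g i xs) ` I)"
  proof -
    fix xs
    have "\<forall>i\<in>I. g i xs \<le> 1" using sup(2) unfolding Agg_def by (cases "xs \<in> cube n") auto
    then show "bdd_above ((\<lambda>i. g i xs) ` I)" by (auto intro: bdd_aboveI2)
  qed
  show ?case unfolding Agg_def
  proof (intro CollectI case_prodI conjI ballI allI impI)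
    fix xs assume "xs \<notin> cube n"
    then have "\<forall>i\<in>I. g i xs = 0" using sup(2) unfolding Agg_def by auto
    then show "(SUP i\<in>I. g i xs) = 0" using sup(1) by simp
  next
    fix xs assume xs: "xs \<in> cube n"
    obtain i0 where i0: "i0 \<in> I" using sup(1) by auto
    have "0 \<le> g i0 xs" using sup(2) i0 xs unfolding Agg_def by auto
    also have "\<dots> \<le> (SUP i\<in>I. g i xs)" by (rule cSUP_upper[OF i0 b])
    finally have 0: "0 \<le> (SUP i\<in>I. g i xs)" .
    have "(SUP i\<in>I. g i xs) \<le> 1"
      using sup(1,2) xs unfolding Agg_def by (auto intro!: cSUP_least)
    then show "(SUP i\<in>I. g i xs) \<in> {0..1}" using 0 by simp
  next
    fix xs ys assume xs: "xs \<in> cube n" and ys: "ys \<in> cube n" and le: "\<forall>i<n. xs ! i \<le> ys ! i"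
    show "(SUP i\<in>I. g i xs) \<le> (SUP i\<in>I. g i ys)"
    proof (rule cSUP_mono[OF sup(1) b])
      fix i assume "i \<in> I" then show "\<exists>m\<in>I. g i xs \<le> g m ys"
        using sup(2) xs ys le unfolding Agg_def by blast
    qed
  next
    have "\<forall>i\<in>I. g i (replicate n 0) = 0" using sup(2) unfolding Agg_def by auto
    then show "(SUP i\<in>I. g i (replicate n 0)) = 0" using sup(1) by simp
  next
    have "\<forall>i\<in>I. g i (replicate n 1) = 1" using sup(2) unfolding Agg_def by auto
    then show "(SUP i\<in>I. g i (replicate n 1)) = 1" using sup(1) by simp
  qed
next
  case (inf I n g)
  have b: "\<And>xs. bdd_below ((\<lambda>i. g i xs) ` I)"
  proof -
    fix xs
    have "\<forall>i\<in>I. 0 \<le> g i xs" using inf(2) unfolding Agg_def by (cases "xs \<in> cube n") auto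
    then show "bdd_below ((\<lambda>i. g i xs) ` I)" by (auto intro: bdd_belowI2)
  qed
  show ?case unfolding Agg_def
  proof (intro CollectI case_prodI conjI ballI allI impI)
    fix xs assume "xs \<notin> cube n"
    then have "\<forall>i\<in>I. g i xs = 0" using inf(2) unfolding Agg_def by auto
    then show "(INF i\<in>I. g i xs) = 0" using inf(1) by simp
  next
    fix xs assume xs: "xs \<in> cube n"
    obtain i0 where i0: "i0 \<in> I" using inf(1) by auto
    have "(INF i\<in>I. g i xs) \<le> g i0 xs" by (rule cINF_lower[OF b i0])
    also have "\<dots> \<le> 1" using inf(2) i0 xs unfolding Agg_def by auto
    finally have 1: "(INF i\<in>I. g i xs) \<le> 1" .
    have "0 \<le> (INF i\<in>I. g i xs)"
      using inf(1,2) xs unfolding Agg_def by (auto intro!: cINF_greatest)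
    then show "(INF i\<in>I. g i xs) \<in> {0..1}" using 1 by simp
  next
    fix xs ys assume xs: "xs \<in> cube n" and ys: "ys \<in> cube n" and le: "\<forall>i<n. xs ! i \<le> ys ! i"
    show "(INF i\<in>I. g i xs) \<le> (INF i\<in>I. g i ys)"
    proof (rule cINF_mono[OF inf(1) b])
      fix i assume "i \<in> I" then show "\<exists>m\<in>I. g m xs \<le> g i ys"
        using inf(2) xs ys le unfolding Agg_def by blast
    qed
  next
    have "\<forall>i\<in>I. g i (replicate n 0) = 0" using inf(2) unfolding Agg_def by auto
    then show "(INF i\<in>I. g i (replicate n 0)) = 0" using inf(1) by simp
  next
    have "\<forall>i\<in>I. g i (replicate n 1) = 1" using inf(2) unfolding Agg_def by auto
    then show "(INF i\<in>I. g i (replicate n 1)) = 1" using inf(1) by simp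
  qed
qed




lemma Cgen_range: "(n, g) \<in> Cgen \<Longrightarrow> 0 \<le> g xs \<and> g xs \<le> 1"
  using Cgen_Agg[of n g] unfolding Agg_def by (cases "xs \<in> cube n") auto

lemma Cgen_ext:
  assumes "(n, g) \<in> Cgen" "\<forall>xs\<in>cube n. h xs = g xs" "\<forall>xs. xs \<notin> cube n \<longrightarrow> h xs = 0"
  shows "(n, h) \<in> Cgen"
proof -
  have "h = g" using assms Cgen_Agg[of n g] unfolding Agg_def by (auto intro!: ext)
  then show ?thesis using assms(1) by simp
qed

lemma Cgen_supS:
  fixes \<phi> :: "'a \<Rightarrow> real"
  assumes "S \<noteq> {}" "inj_on \<phi> S" "\<forall>s\<in>S. (n, G s) \<in> Cgen"
  shows "(n, \<lambda>xs. SUP s\<in>S. G s xs) \<in> Cgen"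
proof -
  have "(n, \<lambda>xs. SUP r\<in>\<phi> ` S. G (inv_into S \<phi> r) xs) \<in> Cgen"
    using assms by (intro Cgen.sup) (auto simp: inv_into_f_f)
  moreover have "(\<lambda>xs. SUP r\<in>\<phi> ` S. G (inv_into S \<phi> r) xs) = (\<lambda>xs. SUP s\<in>S. G s xs)"
    using assms(2) by (auto simp: image_image inv_into_f_f intro!: ext SUP_cong)
  ultimately show ?thesis by simp
qed

lemma Cgen_infS:
  fixes \<phi> :: "'a \<Rightarrow> real"
  assumes "S \<noteq> {}" "inj_on \<phi> S" "\<forall>s\<in>S. (n, G s) \<in> Cgen"
  shows "(n, \<lambda>xs. INF s\<in>S. G s xs) \<in> Cgen"
proof -
  have "(n, \<lambda>xs. INF r\<in>\<phi> ` S. G (inv_into S \<phi> r) xs) \<in> Cgen"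
    using assms by (intro Cgen.inf) (auto simp: inv_into_f_f)
  moreover have "(\<lambda>xs. INF r\<in>\<phi> ` S. G (inv_into S \<phi> r) xs) = (\<lambda>xs. INF s\<in>S. G s xs)"
    using assms(2) by (auto simp: image_image inv_into_f_f intro!: ext INF_cong)
  ultimately show ?thesis by simp
qed

lemma cube_Suc: "cube (Suc k) = (\<Union>a\<in>{0..1}. (\<lambda>b. a # b) ` cube k)"
  unfolding cube_def by (auto simp: length_Suc_conv)

lemma cube_ne: "cube k \<noteq> {}"
  unfolding cube_def by (rule ccontr) (auto dest: spec[of _ "replicate k 0"])

lemma Cgen_SUP_cube:
  "(\<forall>b\<in>cube k. (n, G b) \<in> Cgen) \<Longrightarrow> (n, \<lambda>xs. SUP b\<in>cube k. G b xs) \<in> Cgen"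
proof (induction k arbitrary: G)
  case 0
  have "cube 0 = {[]}" unfolding cube_def by auto
  then show ?case using 0 by simp
next
  case (Suc k)
  have IH: "(n, \<lambda>xs. SUP b\<in>cube k. G (a # b) xs) \<in> Cgen" if "a \<in> {0..1}" for a
    using Suc.IH[of "\<lambda>b. G (a # b)"] Suc.prems that unfolding cube_Suc by auto
  have "(n, \<lambda>xs. SUP a\<in>{0..1::real}. SUP b\<in>cube k. G (a # b) xs) \<in> Cgen"
    using IH by (intro Cgen.sup) auto
  moreover have "(SUP a\<in>{0..1::real}. SUP b\<in>cube k. G (a # b) xs) = (SUP b\<in>cube (Suc k). G b xs)" for xs
  proof -
    have bdd: "bdd_above (\<Union>a\<in>{0..1}. (\<lambda>z. G z xs) ` ((\<lambda>b. a # b) ` cube k))"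
      using Suc.prems Cgen_range unfolding cube_Suc by (intro bdd_aboveI[of _ 1]) blast
    have "(SUP b\<in>cube (Suc k). G b xs) = (SUP a\<in>{0..1::real}. SUP z\<in>(\<lambda>b. a # b) ` cube k. G z xs)"
      unfolding cube_Suc by (rule cSUP_UNION) (use bdd cube_ne in auto)
    also have "\<dots> = (SUP a\<in>{0..1::real}. SUP b\<in>cube k. G (a # b) xs)"
      by (simp add: image_image)
    finally show ?thesis by simp
  qed
  ultimately show ?case by simp
qed




lemma INF_ind: "I \<noteq> {} \<Longrightarrow> (INF i\<in>I. (if P i then 1 else 0::real)) = (if \<forall>i\<in>I. P i then 1 else 0)"
proof -
  assume I: "I \<noteq> {}"
  have bb: "bdd_below ((\<lambda>i. (if P i then 1 else 0::real)) ` I)" by (intro bdd_belowI[of _ 0]) auto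
  show ?thesis
  proof (cases "\<forall>i\<in>I. P i")
    case True then show ?thesis using I by simp
  next
    case False
    then obtain i where i: "i \<in> I" "\<not> P i" by auto
    have "(INF i\<in>I. (if P i then 1 else 0::real)) \<le> 0" using cINF_lower[OF bb i(1)] i by simp
    moreover have "0 \<le> (INF i\<in>I. (if P i then 1 else 0::real))" using I by (intro cINF_greatest) auto
    ultimately show ?thesis using False by simp
  qed
qed

lemma SUP_ind: "I \<noteq> {} \<Longrightarrow> (SUP i\<in>I. (if P i then 1 else 0::real)) = (if \<exists>i\<in>I. P i then 1 else 0)"
proof -
  assume I: "I \<noteq> {}"
  have bb: "bdd_above ((\<lambda>i. (if P i then 1 else 0::real)) ` I)" by (intro bdd_aboveI[of _ 1]) auto
  show ?thesis
  proof (cases "\<exists>i\<in>I. P i")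
    case False then show ?thesis using I by simp
  next
    case True
    then obtain i where i: "i \<in> I" "P i" by auto
    have "1 \<le> (SUP i\<in>I. (if P i then 1 else 0::real))" using cSUP_upper[OF i(1) bb] i by simp
    moreover have "(SUP i\<in>I. (if P i then 1 else 0::real)) \<le> 1" using I by (intro cSUP_least) auto
    ultimately show ?thesis using True by simp
  qed
qed

lemma Sup_rats: "0 \<le> (c::real) \<Longrightarrow> (SUP r\<in>{r\<in>\<rat>. 0 \<le> r \<and> r \<le> c}. r) = c"
proof -
  assume c: "0 \<le> c"
  let ?R = "{r\<in>\<rat>. 0 \<le> r \<and> r \<le> c}"
  have ne: "?R \<noteq> {}" using c by (auto intro!: exI[of _ 0])
  have le: "(SUP r\<in>?R. r) \<le> c" using ne by (intro cSUP_least) auto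
  have bdd: "bdd_above ((\<lambda>r. r) ` ?R)" by (intro bdd_aboveI[of _ c]) auto
  have "c \<le> (SUP r\<in>?R. r)"
  proof (rule ccontr)
    assume "\<not> c \<le> (SUP r\<in>?R. r)"
    then have lt: "(SUP r\<in>?R. r) < c" by simp
    have "0 \<le> (SUP r\<in>?R. r)" using cSUP_upper[OF _ bdd, of 0] c by simp
    obtain q where q: "q \<in> \<rat>" "(SUP r\<in>?R. r) < q" "q < c" using Rats_dense_in_real[OF lt] by auto
    have "q \<in> ?R" using q \<open>0 \<le> (SUP r\<in>?R. r)\<close> by auto
    then have "q \<le> (SUP r\<in>?R. r)" using cSUP_upper[OF _ bdd] by simp
    then show False using q by simp
  qed
  then show ?thesis using le by simp
qed

definition P :: "nat \<Rightarrow> nat \<Rightarrow> real list \<Rightarrow> real" where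
  "P n i xs = (if xs \<in> cube n then xs ! i else 0)"
definition Tp :: "nat \<Rightarrow> real list \<Rightarrow> real" where
  "Tp n xs = (INF i\<in>{..<n}. chi 1 (P n i xs))"
definition Nz :: "nat \<Rightarrow> real list \<Rightarrow> real" where
  "Nz n xs = (SUP i\<in>{..<n}. chi 0 (P n i xs))"
definition Ge :: "nat \<Rightarrow> nat \<Rightarrow> real \<Rightarrow> real list \<Rightarrow> real" where
  "Ge n i c xs = (INF q\<in>{q\<in>\<rat>. 0 < q \<and> q < c}. chi q (P n i xs))"
definition Fa :: "nat \<Rightarrow> real list \<Rightarrow> nat \<Rightarrow> real list \<Rightarrow> real" where
  "Fa n a i = (if 0 < a ! i then Ge n i (a ! i) else Nz n)"
definition Ea :: "nat \<Rightarrow> real list \<Rightarrow> real list \<Rightarrow> real" where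
  "Ea n a xs = (INF i\<in>{..<n}. Fa n a i xs)"
definition Ma :: "nat \<Rightarrow> real list \<Rightarrow> real \<Rightarrow> real list \<Rightarrow> real" where
  "Ma n a r xs = Med r (Tp n xs) (Ea n a xs)"
definition Ha :: "nat \<Rightarrow> (real list \<Rightarrow> real) \<Rightarrow> real list \<Rightarrow> real list \<Rightarrow> real" where
  "Ha n f a xs = (SUP r\<in>{r\<in>\<rat>. 0 \<le> r \<and> r \<le> f a}. Ma n a r xs)"

lemma P_C: "i < n \<Longrightarrow> (n, P n i) \<in> Cgen"
  using Cgen.proj[of i n] unfolding P_def by simp

lemma Tp_C: "0 < n \<Longrightarrow> (n, Tp n) \<in> Cgen"
  unfolding Tp_def[abs_def]
  by (rule Cgen_infS[where \<phi>=real]) (auto intro!: Cgen.chi P_C)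

lemma Nz_C: "0 < n \<Longrightarrow> (n, Nz n) \<in> Cgen"
  unfolding Nz_def[abs_def]
  by (rule Cgen_supS[where \<phi>=real]) (auto intro!: Cgen.chi P_C)

lemma Ge_C: "i < n \<Longrightarrow> 0 < c \<Longrightarrow> c \<le> 1 \<Longrightarrow> (n, Ge n i c) \<in> Cgen"
proof -
  assume i: "i < n" and c: "0 < c" "c \<le> 1"
  obtain q where "q \<in> \<rat>" "0 < q" "q < c" using Rats_dense_in_real[OF c(1)] by auto
  then have ne: "{q\<in>\<rat>. 0 < q \<and> q < c} \<noteq> {}" by auto
  show ?thesis unfolding Ge_def[abs_def]
    by (rule Cgen.inf[OF ne]) (use c in \<open>auto intro!: Cgen.chi P_C[OF i]\<close>)
qed

lemma Ea_C: "0 < n \<Longrightarrow> a \<in> cube n \<Longrightarrow> (n, Ea n a) \<in> Cgen"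
  unfolding Ea_def[abs_def]
  by (rule Cgen_infS[where \<phi>=real]) (auto simp: Fa_def intro!: Ge_C Nz_C dest: cube_nth)

lemma Ma_C: "0 < n \<Longrightarrow> a \<in> cube n \<Longrightarrow> r \<in> \<rat> \<Longrightarrow> 0 \<le> r \<Longrightarrow> r \<le> 1 \<Longrightarrow> (n, Ma n a r) \<in> Cgen"
  unfolding Ma_def[abs_def] by (intro Cgen.med Tp_C Ea_C) auto

lemma Ha_C: "0 < n \<Longrightarrow> a \<in> cube n \<Longrightarrow> 0 \<le> f a \<Longrightarrow> f a \<le> 1 \<Longrightarrow> (n, Ha n f a) \<in> Cgen"
  unfolding Ha_def[abs_def]
  by (rule Cgen.sup) (auto intro!: Ma_C exI[of _ 0])




lemma P_val: "xs \<in> cube n \<Longrightarrow> P n i xs = xs ! i"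
  by (simp add: P_def)

lemma Tp_val: "0 < n \<Longrightarrow> xs \<in> cube n \<Longrightarrow> Tp n xs = (if \<forall>i<n. xs ! i = 1 then 1 else 0)"
proof -
  assume n: "0 < n" and xs: "xs \<in> cube n"
  have "\<forall>i\<in>{..<n}. chi 1 (P n i xs) = (if xs ! i = 1 then 1 else 0)"
    using cube_nth[OF xs] by (force simp: chi_def P_val[OF xs])
  then have "Tp n xs = (INF i\<in>{..<n}. (if xs ! i = 1 then 1 else 0::real))"
    unfolding Tp_def by (intro INF_cong) auto
  also have "\<dots> = (if \<forall>i<n. xs ! i = 1 then 1 else 0)"
    using n by (subst INF_ind) auto
  finally show ?thesis .
qed

lemma Nz_val: "0 < n \<Longrightarrow> xs \<in> cube n \<Longrightarrow> Nz n xs = (if \<exists>i<n. xs ! i \<noteq> 0 then 1 else 0)"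
proof -
  assume n: "0 < n" and xs: "xs \<in> cube n"
  have "\<forall>i\<in>{..<n}. chi 0 (P n i xs) = (if xs ! i \<noteq> 0 then 1 else 0)"
    using cube_nth[OF xs] by (force simp: chi_def P_val[OF xs])
  then have "Nz n xs = (SUP i\<in>{..<n}. (if xs ! i \<noteq> 0 then 1 else 0::real))"
    unfolding Nz_def by (intro SUP_cong) auto
  also have "\<dots> = (if \<exists>i<n. xs ! i \<noteq> 0 then 1 else 0)"
    using n by (subst SUP_ind) auto
  finally show ?thesis .
qed

lemma Ge_val: "i < n \<Longrightarrow> 0 < c \<Longrightarrow> xs \<in> cube n \<Longrightarrow> Ge n i c xs = (if c \<le> xs ! i then 1 else 0)"
proof -
  assume i: "i < n" and c: "0 < c" and xs: "xs \<in> cube n"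
  let ?R = "{q\<in>\<rat>. 0 < q \<and> q < c}"
  obtain q0 where "q0 \<in> \<rat>" "0 < q0" "q0 < c" using Rats_dense_in_real[OF c] by auto
  then have ne: "?R \<noteq> {}" by auto
  have x0: "0 \<le> xs ! i" using cube_nth[OF xs i] by simp
  have "Ge n i c xs = (INF q\<in>?R. (if q \<le> xs ! i \<and> xs ! i \<noteq> 0 then 1 else 0::real))"
    unfolding Ge_def chi_def P_val[OF xs] by simp
  also have "\<dots> = (if \<forall>q\<in>?R. q \<le> xs ! i \<and> xs ! i \<noteq> 0 then 1 else 0)"
    by (rule INF_ind[OF ne])
  also have "(\<forall>q\<in>?R. q \<le> xs ! i \<and> xs ! i \<noteq> 0) = (c \<le> xs ! i)"
  proof
    assume H: "\<forall>q\<in>?R. q \<le> xs ! i \<and> xs ! i \<noteq> 0"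
    show "c \<le> xs ! i"
    proof (rule ccontr)
      assume "\<not> c \<le> xs ! i"
      then have "xs ! i < c" by simp
      then obtain q where "q \<in> \<rat>" "xs ! i < q" "q < c" using Rats_dense_in_real by blast
      then show False using H x0 by force
    qed
  next
    assume "c \<le> xs ! i" then show "\<forall>q\<in>?R. q \<le> xs ! i \<and> xs ! i \<noteq> 0" using c by auto
  qed
  finally show ?thesis .
qed

definition EqP :: "nat \<Rightarrow> real list \<Rightarrow> real list \<Rightarrow> bool" where
  "EqP n a xs = (\<forall>i<n. if 0 < a ! i then a ! i \<le> xs ! i else (\<exists>j<n. xs ! j \<noteq> 0))"

lemma Ea_val: "0 < n \<Longrightarrow> xs \<in> cube n \<Longrightarrow> Ea n a xs = (if EqP n a xs then 1 else 0)"
proof -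
  assume n: "0 < n" and xs: "xs \<in> cube n"
  have "\<forall>i\<in>{..<n}. Fa n a i xs = (if (if 0 < a ! i then a ! i \<le> xs ! i else (\<exists>j<n. xs ! j \<noteq> 0)) then 1 else 0)"
    using n xs by (auto simp: Fa_def Ge_val Nz_val)
  then have "Ea n a xs = (INF i\<in>{..<n}. (if (if 0 < a ! i then a ! i \<le> xs ! i else (\<exists>j<n. xs ! j \<noteq> 0)) then 1 else 0::real))"
    unfolding Ea_def by (intro INF_cong) auto
  also have "\<dots> = (if EqP n a xs then 1 else 0)"
    using n unfolding EqP_def by (subst INF_ind) auto
  finally show ?thesis .
qed

lemma Ha_val:
  assumes n: "0 < n" and a: "a \<in> cube n" and xs: "xs \<in> cube n" and fa: "0 \<le> f a" "f a \<le> 1"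
  shows "Ha n f a xs = (if \<forall>i<n. xs ! i = 1 then 1 else if EqP n a xs then f a else 0)"
proof -
  let ?R = "{r\<in>\<rat>. 0 \<le> r \<and> r \<le> f a}"
  have ne: "?R \<noteq> {}" using fa by (auto intro!: exI[of _ 0])
  show ?thesis
  proof (cases "\<forall>i<n. xs ! i = 1")
    case True
    have "EqP n a xs" unfolding EqP_def using True n cube_nth[OF a] by auto
    then have "\<forall>r\<in>?R. Ma n a r xs = 1" using True n xs
      by (auto simp: Ma_def Tp_val Ea_val Med_def)
    then show ?thesis unfolding Ha_def using True ne by simp
  next
    case False
    show ?thesis
    proof (cases "EqP n a xs")
      case True
      then have "\<forall>r\<in>?R. Ma n a r xs = r" using False n xs fa
        by (auto simp: Ma_def Tp_val Ea_val Med_def min_def)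
      then have "Ha n f a xs = (SUP r\<in>?R. r)" unfolding Ha_def by (intro SUP_cong) auto
      then show ?thesis using Sup_rats[OF fa(1)] False True by auto
    next
      case F2: False
      then have "\<forall>r\<in>?R. Ma n a r xs = 0" using False n xs
        by (auto simp: Ma_def Tp_val Ea_val Med_def)
      then show ?thesis unfolding Ha_def using False F2 ne by simp
    qed
  qed
qed




lemma Agg_Cgen:
  assumes "(n, f) \<in> Agg" shows "(n, f) \<in> Cgen"
proof -
  have out: "\<forall>xs. xs \<notin> cube n \<longrightarrow> f xs = 0" and rng: "\<forall>xs\<in>cube n. f xs \<in> {0..1}"
    and mono: "\<forall>xs\<in>cube n. \<forall>ys\<in>cube n. (\<forall>i<n. xs ! i \<le> ys ! i) \<longrightarrow> f xs \<le> f ys"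
    and f0: "f (replicate n 0) = 0" and f1: "f (replicate n 1) = 1"
    using assms unfolding Agg_def by auto
  have n: "0 < n"
  proof (rule ccontr)
    assume "\<not> 0 < n" then have "n = 0" by simp
    then show False using f0 f1 by simp
  qed
  have C: "(n, \<lambda>xs. SUP a\<in>cube n. Ha n f a xs) \<in> Cgen"
    using rng by (intro Cgen_SUP_cube ballI Ha_C n) auto
  have up: "Ha n f a xs \<le> f xs" if a: "a \<in> cube n" and xs: "xs \<in> cube n" for a xs
  proof -
    have fa: "0 \<le> f a" "f a \<le> 1" using rng a by auto
    have fx: "0 \<le> f xs" "f xs \<le> 1" using rng xs by auto
    show ?thesis
    proof (cases "\<forall>i<n. xs ! i = 1")
      case True
      have "xs = replicate n 1" using True xs by (intro nth_equalityI) (auto simp: cube_def)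
      then show ?thesis using Ha_val[where f=f, OF n a xs fa] True f1 by simp
    next
      case False
      show ?thesis
      proof (cases "EqP n a xs")
        case True
        have "\<forall>i<n. a ! i \<le> xs ! i"
        proof (intro allI impI)
          fix i assume i: "i < n"
          show "a ! i \<le> xs ! i"
            using True i cube_nth[OF a i] cube_nth[OF xs i] unfolding EqP_def
            by (cases "0 < a ! i") auto
        qed
        then have "f a \<le> f xs" using mono a xs by blast
        then show ?thesis using Ha_val[where f=f, OF n a xs fa] True False by simp
      next
        case F2: False
        then show ?thesis using Ha_val[where f=f, OF n a xs fa] F2 False fx by simp
      qed
    qed
  qed
  have low: "f xs \<le> Ha n f xs xs" if xs: "xs \<in> cube n" for xs
  proof -
    have fx: "0 \<le> f xs" "f xs \<le> 1" using rng xs by auto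
    show ?thesis
    proof (cases "\<forall>i<n. xs ! i = 1")
      case True
      then show ?thesis using Ha_val[where f=f, OF n xs xs fx] fx by simp
    next
      case False
      show ?thesis
      proof (cases "\<exists>j<n. xs ! j \<noteq> 0")
        case True
        then have "EqP n xs xs" unfolding EqP_def by auto
        then show ?thesis using Ha_val[where f=f, OF n xs xs fx] False by simp
      next
        case F2: False
        have "xs = replicate n 0" using F2 xs by (intro nth_equalityI) (auto simp: cube_def)
        then have "f xs = 0" using f0 by simp
        then show ?thesis using Ha_val[where f=f, OF n xs xs fx] fx by simp
      qed
    qed
  qed
  show ?thesis
  proof (rule Cgen_ext[OF C])
    show "\<forall>xs. xs \<notin> cube n \<longrightarrow> f xs = 0" by (rule out)
    show "\<forall>xs\<in>cube n. f xs = (SUP a\<in>cube n. Ha n f a xs)"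
    proof
      fix xs assume xs: "xs \<in> cube n"
      have bdd: "bdd_above ((\<lambda>a. Ha n f a xs) ` cube n)"
        using up xs by (intro bdd_aboveI[of _ "f xs"]) auto
      have "(SUP a\<in>cube n. Ha n f a xs) \<le> f xs"
        using up xs cube_ne by (intro cSUP_least) auto
      moreover have "f xs \<le> (SUP a\<in>cube n. Ha n f a xs)"
        using low[OF xs] cSUP_upper[OF xs bdd] by linarith
      ultimately show "f xs = (SUP a\<in>cube n. Ha n f a xs)" by simp
    qed
  qed
qed

theorem corollary1:
  shows "Cgen = Agg"
proof (rule set_eqI)
  fix p :: "nat \<times> (real list \<Rightarrow> real)"
  obtain n f where p: "p = (n, f)" by (cases p)
  show "p \<in> Cgen \<longleftrightarrow> p \<in> Agg" unfolding p using Cgen_Agg Agg_Cgen by blast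
qed


end
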